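(* Let $n<\omega$, let $L\in\mathbf{M}_n$ and let $P$ be its dual $pm$-space. Then every order component of $P$ is a closed subset of $P$.
   Context: $\mathbf{M}_n$ is the variety of regular pseudocomplemented de Morgan algebras of range $n$: algebras $(L;\wedge,\vee,{}^\ast,{}^\prime,0,1)$ with bounded distributive lattice reduct, pseudocomplement ${}^\ast$, de Morgan involution ${}^\prime$, satisfying $x\wedge x^{\prime\ast\prime}\le y\vee y^\ast$ (regularity) and $(x\wedge x^{\prime\ast})^{n(\prime\ast)}=(x\wedge x^{\prime\ast})^{(n+1)(\prime\ast)}$, where $x^{0(\prime\ast)}=x$, $x^{(k+1)(\prime\ast)}=((x^{k(\prime\ast)})')^\ast$. The dual $pm$-space is the Priestley space $(P;\tau,\le)$ of prime ideals with the involution $\zeta(I)=\{a:a'\notin I\}$. An order component of $P$ is a maximal subset any two elements of which are joined by a finite path in the comparability graph of $(P;\le)$. *)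

theory Defs
  imports "HOL-Analysis.Analysis"
begin

unbundle lattice_syntax

text \<open>An algebra (L; meet, join, pc, dm, bot, top): the lattice reduct is the carrier type
  'a with its bounded distributive lattice structure; pc is the pseudocomplement (x^*),
  dm is the de Morgan involution (x').\<close>

definition is_pseudocomplement :: "('a::{bounded_lattice,distrib_lattice} \<Rightarrow> 'a) \<Rightarrow> bool" where
  "is_pseudocomplement pc \<longleftrightarrow> (\<forall>x y. x \<sqinter> y = bot \<longleftrightarrow> y \<le> pc x)"

definition is_de_morgan_involution :: "('a::{bounded_lattice,distrib_lattice} \<Rightarrow> 'a) \<Rightarrow> bool" where
  "is_de_morgan_involution dm \<longleftrightarrow>
     (\<forall>x. dm (dm x) = x) \<and> (\<forall>x y. dm (x \<squnion> y) = dm x \<sqinter> dm y) \<and> dm bot = top"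

definition iter_dmpc :: "('a \<Rightarrow> 'a) \<Rightarrow> ('a \<Rightarrow> 'a) \<Rightarrow> nat \<Rightarrow> 'a \<Rightarrow> 'a" where
  "iter_dmpc pc dm k = (\<lambda>x. pc (dm x)) ^^ k"

definition in_M :: "nat \<Rightarrow> ('a::{bounded_lattice,distrib_lattice} \<Rightarrow> 'a) \<Rightarrow> ('a \<Rightarrow> 'a) \<Rightarrow> bool" where
  "in_M n pc dm \<longleftrightarrow> is_pseudocomplement pc \<and> is_de_morgan_involution dm
     \<and> (\<forall>x y. x \<sqinter> dm (pc (dm x)) \<le> y \<squnion> pc y)
     \<and> (\<forall>x. iter_dmpc pc dm n (x \<sqinter> pc (dm x)) = iter_dmpc pc dm (Suc n) (x \<sqinter> pc (dm x)))"

definition lattice_ideal :: "'a::{bounded_lattice,distrib_lattice} set \<Rightarrow> bool" where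
  "lattice_ideal I \<longleftrightarrow> bot \<in> I \<and> (\<forall>a\<in>I. \<forall>b. b \<le> a \<longrightarrow> b \<in> I) \<and> (\<forall>a\<in>I. \<forall>b\<in>I. a \<squnion> b \<in> I)"

definition prime_ideal :: "'a::{bounded_lattice,distrib_lattice} set \<Rightarrow> bool" where
  "prime_ideal I \<longleftrightarrow> lattice_ideal I \<and> top \<notin> I \<and> (\<forall>a b. a \<sqinter> b \<in> I \<longrightarrow> a \<in> I \<or> b \<in> I)"

definition prime_spectrum :: "'a::{bounded_lattice,distrib_lattice} set set" where
  "prime_spectrum = {I. prime_ideal I}"

definition priestley_subbasis :: "'a::{bounded_lattice,distrib_lattice} set set set" where
  "priestley_subbasis = (\<Union>a. {{I \<in> prime_spectrum. a \<notin> I}, {I \<in> prime_spectrum. a \<in> I}})"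

definition priestley_topology :: "'a::{bounded_lattice,distrib_lattice} set topology" where
  "priestley_topology = topology_generated_by priestley_subbasis"

definition pm_zeta :: "('a \<Rightarrow> 'a) \<Rightarrow> 'a set \<Rightarrow> 'a set" where
  "pm_zeta dm I = {a. dm a \<notin> I}"

definition comparable_in :: "'a set set \<Rightarrow> 'a set \<Rightarrow> 'a set \<Rightarrow> bool" where
  "comparable_in P I J \<longleftrightarrow> I \<in> P \<and> J \<in> P \<and> (I \<subseteq> J \<or> J \<subseteq> I)"

definition path_connected_in :: "'a set set \<Rightarrow> 'a set \<Rightarrow> 'a set \<Rightarrow> bool" where
  "path_connected_in P I J \<longleftrightarrow> (comparable_in P)\<^sup>*\<^sup>* I J"

definition pairwise_joined :: "'a set set \<Rightarrow> 'a set set \<Rightarrow> bool" where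
  "pairwise_joined P C \<longleftrightarrow> C \<subseteq> P \<and> (\<forall>I\<in>C. \<forall>J\<in>C. path_connected_in P I J)"

definition order_component :: "'a set set \<Rightarrow> 'a set set \<Rightarrow> bool" where
  "order_component P C \<longleftrightarrow> pairwise_joined P C \<and> (\<forall>D. pairwise_joined P D \<and> C \<subseteq> D \<longrightarrow> D = C)"

end

theory Submission
  imports Defs
begin


lemma ideal_down: "lattice_ideal I \<Longrightarrow> a \<in> I \<Longrightarrow> b \<le> a \<Longrightarrow> b \<in> I"
  unfolding lattice_ideal_def by blast
lemma ideal_sup: "lattice_ideal I \<Longrightarrow> a \<in> I \<Longrightarrow> b \<in> I \<Longrightarrow> a \<squnion> b \<in> I"
  unfolding lattice_ideal_def by blast
lemma ideal_bot: "lattice_ideal I \<Longrightarrow> bot \<in> I"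
  unfolding lattice_ideal_def by blast
lemma prime_inf: "prime_ideal I \<Longrightarrow> a \<notin> I \<Longrightarrow> b \<notin> I \<Longrightarrow> a \<sqinter> b \<notin> I"
  unfolding prime_ideal_def by blast

lemma distrib_aux:
  fixes m1 a m2 b :: "'a::{bounded_lattice,distrib_lattice}"
  shows "(m1 \<squnion> a) \<sqinter> (m2 \<squnion> b) \<le> (m1 \<squnion> m2) \<squnion> (a \<sqinter> b)"
proof -
  have "(m1 \<squnion> a) \<sqinter> (m2 \<squnion> b) = (m1 \<sqinter> (m2 \<squnion> b)) \<squnion> (a \<sqinter> (m2 \<squnion> b))"
    by (simp add: inf_sup_distrib2)
  also have "a \<sqinter> (m2 \<squnion> b) = (a \<sqinter> m2) \<squnion> (a \<sqinter> b)" by (simp add: inf_sup_distrib1)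
  finally have eq: "(m1 \<squnion> a) \<sqinter> (m2 \<squnion> b) = (m1 \<sqinter> (m2 \<squnion> b)) \<squnion> ((a \<sqinter> m2) \<squnion> (a \<sqinter> b))" .
  have 1: "m1 \<sqinter> (m2 \<squnion> b) \<le> (m1 \<squnion> m2) \<squnion> (a \<sqinter> b)"
    by (rule le_supI1, rule le_supI1, rule inf_le1)
  have 2: "a \<sqinter> m2 \<le> (m1 \<squnion> m2) \<squnion> (a \<sqinter> b)"
    by (rule le_supI1, rule le_supI2, rule inf_le2)
  have 3: "a \<sqinter> b \<le> (m1 \<squnion> m2) \<squnion> (a \<sqinter> b)"
    by (rule le_supI2, rule order_refl)
  show ?thesis unfolding eq using 1 2 3 by (intro le_supI)
qed

lemma prime_ext:
  fixes H :: "'a::{bounded_lattice,distrib_lattice} set"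
  assumes H: "lattice_ideal H" "top \<notin> H"
  shows "\<exists>J. prime_ideal J \<and> H \<subseteq> J"
proof -
  let ?A = "{M. lattice_ideal M \<and> top \<notin> M \<and> H \<subseteq> M}"
  have "\<exists>M\<in>?A. \<forall>X\<in>?A. M \<subseteq> X \<longrightarrow> X = M"
  proof (rule subset_Zorn_nonempty)
    show "?A \<noteq> {}" using H by blast
    fix \<C> assume ne: "\<C> \<noteq> {}" and ch: "subset.chain ?A \<C>"
    then have sub: "\<C> \<subseteq> ?A" and lin: "\<And>X Y. X \<in> \<C> \<Longrightarrow> Y \<in> \<C> \<Longrightarrow> X \<subseteq> Y \<or> Y \<subseteq> X"
      by (auto simp: subset.chain_def)
    show "\<Union>\<C> \<in> ?A"
    proof -
      have "lattice_ideal (\<Union>\<C>)"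
        unfolding lattice_ideal_def
      proof (intro conjI ballI allI impI)
        show "bot \<in> \<Union>\<C>" using ne sub ideal_bot by blast
      next
        fix a b assume "a \<in> \<Union>\<C>" "b \<le> a" then show "b \<in> \<Union>\<C>" using sub ideal_down by blast
      next
        fix a b assume "a \<in> \<Union>\<C>" "b \<in> \<Union>\<C>"
        then obtain X Y where "X \<in> \<C>" "Y \<in> \<C>" "a \<in> X" "b \<in> Y" by blast
        then show "a \<squnion> b \<in> \<Union>\<C>" using lin[of X Y] sub ideal_sup
          by (metis (no_types, lifting) UnionI mem_Collect_eq subset_iff)
      qed
      then show ?thesis using sub ne by auto
    qed
  qed
  then obtain M where M: "lattice_ideal M" "top \<notin> M" "H \<subseteq> M"
    and max: "\<And>X. lattice_ideal X \<Longrightarrow> top \<notin> X \<Longrightarrow> H \<subseteq> X \<Longrightarrow> M \<subseteq> X \<Longrightarrow> X = M" by auto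
  have gen: "top \<in> {y. \<exists>m\<in>M. y \<le> m \<squnion> a}" if "a \<notin> M" for a
  proof (rule ccontr)
    let ?X = "{y. \<exists>m\<in>M. y \<le> m \<squnion> a}"
    assume nt: "top \<notin> ?X"
    have "lattice_ideal ?X"
      unfolding lattice_ideal_def
    proof (intro conjI ballI allI impI)
      show "bot \<in> ?X" using ideal_bot[OF M(1)] by auto
    next
      fix u v assume "u \<in> ?X" "v \<le> u" then show "v \<in> ?X" using order_trans by blast
    next
      fix u v assume "u \<in> ?X" "v \<in> ?X"
      then obtain m1 m2 where "m1 \<in> M" "m2 \<in> M" "u \<le> m1 \<squnion> a" "v \<le> m2 \<squnion> a" by auto
      then have "u \<squnion> v \<le> (m1 \<squnion> m2) \<squnion> a"
        by (meson le_sup_iff sup_ge1 sup_ge2 order_trans)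
      then show "u \<squnion> v \<in> ?X" using ideal_sup[OF M(1)] \<open>m1 \<in> M\<close> \<open>m2 \<in> M\<close> by blast
    qed
    moreover have "M \<subseteq> ?X" using sup_ge1 by blast
    moreover have aX: "a \<in> ?X" using ideal_bot[OF M(1)] by auto
    ultimately have "?X = M" using max[of ?X] nt M(3) by blast
    then show False using aX that by blast
  qed
  have "prime_ideal M"
    unfolding prime_ideal_def
  proof (intro conjI allI impI M)
    fix a b assume ab: "a \<sqinter> b \<in> M"
    show "a \<in> M \<or> b \<in> M"
    proof (rule ccontr)
      assume "\<not> (a \<in> M \<or> b \<in> M)"
      then obtain m1 m2 where "m1 \<in> M" "m2 \<in> M" "top \<le> m1 \<squnion> a" "top \<le> m2 \<squnion> b"
        using gen by blast
      then have "top \<le> (m1 \<squnion> a) \<sqinter> (m2 \<squnion> b)" by simp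
      then have "top \<le> (m1 \<squnion> m2) \<squnion> (a \<sqinter> b)"
        using distrib_aux[of m1 a m2 b] by (rule order_trans)
      moreover have "(m1 \<squnion> m2) \<squnion> (a \<sqinter> b) \<in> M"
        using ideal_sup[OF M(1)] ab \<open>m1 \<in> M\<close> \<open>m2 \<in> M\<close> by blast
      ultimately have "top \<in> M" using ideal_down[OF M(1)] by blast
      then show False using M by blast
    qed
  qed
  then show ?thesis using M by blast
qed



locale pm =
  fixes pc dm :: "'a::{bounded_lattice,distrib_lattice} \<Rightarrow> 'a"
  assumes pcA: "is_pseudocomplement pc" and dmA: "is_de_morgan_involution dm"
begin

lemma pc_iff: "x \<sqinter> y = bot \<longleftrightarrow> y \<le> pc x"
  using pcA unfolding is_pseudocomplement_def by blast
lemma inf_pc: "x \<sqinter> pc x = bot" using pc_iff by blast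
lemma pc_anti: "x \<le> y \<Longrightarrow> pc y \<le> pc x"
proof -
  assume "x \<le> y"
  have "y \<sqinter> pc y = bot" by (rule inf_pc)
  then have "x \<sqinter> pc y = bot" using \<open>x \<le> y\<close>
    by (metis bot.extremum_uniqueI inf_mono order_refl)
  then show ?thesis using pc_iff by blast
qed
lemma pc_sup: "pc (a \<squnion> b) = pc a \<sqinter> pc b"
proof (rule antisym)
  show "pc (a \<squnion> b) \<le> pc a \<sqinter> pc b" using pc_anti by (simp add: le_infI)
  have "(a \<squnion> b) \<sqinter> (pc a \<sqinter> pc b) = (a \<sqinter> (pc a \<sqinter> pc b)) \<squnion> (b \<sqinter> (pc a \<sqinter> pc b))"
    by (simp add: inf_sup_distrib2)
  also have "a \<sqinter> (pc a \<sqinter> pc b) = bot" using inf_pc[of a] by (metis inf.assoc inf_bot_left)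
  also have "b \<sqinter> (pc a \<sqinter> pc b) = bot" using inf_pc[of b]
    by (metis inf.assoc inf.commute inf_bot_right)
  finally show "pc a \<sqinter> pc b \<le> pc (a \<squnion> b)" using pc_iff by simp
qed

lemma dm_dm[simp]: "dm (dm x) = x" using dmA unfolding is_de_morgan_involution_def by blast
lemma dm_sup: "dm (x \<squnion> y) = dm x \<sqinter> dm y" using dmA unfolding is_de_morgan_involution_def by blast
lemma dm_bot[simp]: "dm bot = top" using dmA unfolding is_de_morgan_involution_def by blast
lemma dm_top[simp]: "dm top = bot" using dm_dm[of bot] dm_bot by metis
lemma dm_anti: "x \<le> y \<Longrightarrow> dm y \<le> dm x"
  by (metis dm_sup inf.cobounded1 sup.absorb2)
lemma dm_inf: "dm (x \<sqinter> y) = dm x \<squnion> dm y"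
  by (metis dm_dm dm_sup)

definition F :: "'a \<Rightarrow> 'a" where "F x = pc (dm x)"

lemma F_mono: "x \<le> y \<Longrightarrow> F x \<le> F y"
  unfolding F_def by (intro pc_anti dm_anti)
lemma F_inf: "F (x \<sqinter> y) = F x \<sqinter> F y"
  unfolding F_def by (simp add: dm_inf pc_sup)
lemma Fk_mono: "x \<le> y \<Longrightarrow> (F^^k) x \<le> (F^^k) y"
  by (induction k) (auto intro: F_mono)
lemma Fk_inf: "(F^^k) (x \<sqinter> y) = (F^^k) x \<sqinter> (F^^k) y"
  by (induction k) (auto simp: F_inf)

definition Z :: "'a set \<Rightarrow> 'a set" where "Z J = {a. dm a \<notin> J}"

lemma Z_prime: assumes "prime_ideal J" shows "prime_ideal (Z J)"
proof -
  have id: "lattice_ideal J" and nt: "top \<notin> J" and pr: "\<And>a b. a \<sqinter> b \<in> J \<Longrightarrow> a \<in> J \<or> b \<in> J"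
    using assms unfolding prime_ideal_def by auto
  show ?thesis
    unfolding prime_ideal_def lattice_ideal_def Z_def
  proof (intro conjI ballI allI impI)
    show "bot \<in> {a. dm a \<notin> J}" using nt by simp
  next
    fix a b assume "a \<in> {a. dm a \<notin> J}" "b \<le> a"
    then show "b \<in> {a. dm a \<notin> J}" using dm_anti[of b a] ideal_down[OF id] by auto
  next
    fix a b assume "a \<in> {a. dm a \<notin> J}" "b \<in> {a. dm a \<notin> J}"
    then show "a \<squnion> b \<in> {a. dm a \<notin> J}" using pr by (auto simp: dm_sup)
  next
    show "top \<notin> {a. dm a \<notin> J}" using ideal_bot[OF id] by simp
  next
    fix a b assume "a \<sqinter> b \<in> {a. dm a \<notin> J}"
    then show "a \<in> {a. dm a \<notin> J} \<or> b \<in> {a. dm a \<notin> J}"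
      using ideal_sup[OF id] by (auto simp: dm_inf)
  qed
qed

lemma Z_Z[simp]: "Z (Z J) = J" unfolding Z_def by simp
lemma Z_anti: "J \<subseteq> K \<Longrightarrow> Z K \<subseteq> Z J" unfolding Z_def by auto

lemma lemmaA:
  assumes G: "lattice_ideal G" and K: "prime_ideal K"
  shows "(\<exists>J. prime_ideal J \<and> G \<subseteq> J \<and> Z J \<subseteq> K) \<longleftrightarrow> (\<forall>x\<in>G. F x \<in> K)"
proof
  assume "\<exists>J. prime_ideal J \<and> G \<subseteq> J \<and> Z J \<subseteq> K"
  then obtain J where J: "prime_ideal J" "G \<subseteq> J" "Z J \<subseteq> K" by blast
  show "\<forall>x\<in>G. F x \<in> K"
  proof
    fix x assume "x \<in> G"
    then have "x \<in> J" using J by blast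
    then have "dm x \<notin> Z J" unfolding Z_def by simp
    moreover have "dm x \<sqinter> F x \<in> Z J" unfolding F_def using inf_pc[of "dm x"]
      ideal_bot Z_prime[OF J(1)] unfolding prime_ideal_def by auto
    ultimately have "F x \<in> Z J" using Z_prime[OF J(1)] unfolding prime_ideal_def by blast
    then show "F x \<in> K" using J by blast
  qed
next
  assume H: "\<forall>x\<in>G. F x \<in> K"
  have Kid: "lattice_ideal K" and Knt: "top \<notin> K" using K unfolding prime_ideal_def by auto
  let ?H = "{y. \<exists>g\<in>G. \<exists>a. a \<notin> K \<and> y \<le> g \<squnion> dm a}"
  have Hid: "lattice_ideal ?H"
    unfolding lattice_ideal_def
  proof (intro conjI ballI allI impI)
    show "bot \<in> ?H" using ideal_bot[OF G] Knt by auto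
  next
    fix u v assume "u \<in> ?H" "v \<le> u" then show "v \<in> ?H" using order_trans by blast
  next
    fix u v assume "u \<in> ?H" "v \<in> ?H"
    then obtain g1 a1 g2 a2 where g: "g1 \<in> G" "g2 \<in> G" "a1 \<notin> K" "a2 \<notin> K"
      "u \<le> g1 \<squnion> dm a1" "v \<le> g2 \<squnion> dm a2" by blast
    have "dm a1 \<le> dm (a1 \<sqinter> a2)" "dm a2 \<le> dm (a1 \<sqinter> a2)" by (simp_all add: dm_inf)
    then have "u \<squnion> v \<le> (g1 \<squnion> g2) \<squnion> dm (a1 \<sqinter> a2)" using g(5,6)
      by (meson le_sup_iff order_trans sup_ge1 sup_ge2)
    moreover have "g1 \<squnion> g2 \<in> G" using ideal_sup[OF G] g by blast
    moreover have "a1 \<sqinter> a2 \<notin> K" using prime_inf[OF K] g by blast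
    ultimately show "u \<squnion> v \<in> ?H" by blast
  qed
  have Hnt: "top \<notin> ?H"
  proof
    assume "top \<in> ?H"
    then obtain g a where ga: "g \<in> G" "a \<notin> K" "top \<le> g \<squnion> dm a" by blast
    then have "dm (g \<squnion> dm a) \<le> dm top" using dm_anti by blast
    then have "dm g \<sqinter> a = bot" by (simp add: dm_sup bot_unique)
    then have "a \<le> F g" unfolding F_def using pc_iff by blast
    then have "a \<in> K" using H ga(1) ideal_down[OF Kid] by blast
    then show False using ga by blast
  qed
  obtain J where J: "prime_ideal J" "?H \<subseteq> J" using prime_ext[OF Hid Hnt] by blast
  have "G \<subseteq> ?H" using Knt by (metis (mono_tags, lifting) dm_top mem_Collect_eq subsetI sup_bot_right order_refl)
  moreover have "Z J \<subseteq> K"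
  proof
    fix b assume "b \<in> Z J"
    then have "dm b \<notin> J" unfolding Z_def by simp
    show "b \<in> K"
    proof (rule ccontr)
      assume "b \<notin> K"
      then have "dm b \<in> ?H" using ideal_bot[OF G] by (metis (mono_tags, lifting) mem_Collect_eq sup_bot_left order_refl)
      then show False using J \<open>dm b \<notin> J\<close> by blast
    qed
  qed
  ultimately show "\<exists>J. prime_ideal J \<and> G \<subseteq> J \<and> Z J \<subseteq> K" using J by blast
qed

end


context pm begin

definition T :: "'a set \<Rightarrow> nat \<Rightarrow> 'a set set" where
  "T I k = {K. prime_ideal K \<and> (\<forall>x\<in>I. (F^^k) x \<in> K)}"

definition step :: "'a set set \<Rightarrow> 'a set set" where
  "step S = {K. prime_ideal K \<and> (\<exists>J\<in>S. Z J \<subseteq> K)}"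

lemma step_T:
  assumes I: "prime_ideal I"
  shows "step (T I k) = T I (Suc k)"
proof -
  have Iid: "lattice_ideal I" using I unfolding prime_ideal_def by auto
  let ?G = "{y. \<exists>x\<in>I. y \<le> (F^^k) x}"
  have G: "lattice_ideal ?G"
    unfolding lattice_ideal_def
  proof (intro conjI ballI allI impI)
    show "bot \<in> ?G" using ideal_bot[OF Iid] by auto
  next
    fix u v assume "u \<in> ?G" "v \<le> u" then show "v \<in> ?G" using order_trans by blast
  next
    fix u v assume "u \<in> ?G" "v \<in> ?G"
    then obtain x1 x2 where x: "x1 \<in> I" "x2 \<in> I" "u \<le> (F^^k) x1" "v \<le> (F^^k) x2" by blast
    have "(F^^k) x1 \<le> (F^^k) (x1 \<squnion> x2)" "(F^^k) x2 \<le> (F^^k) (x1 \<squnion> x2)"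
      by (simp_all add: Fk_mono)
    then have "u \<squnion> v \<le> (F^^k) (x1 \<squnion> x2)" using x by (meson le_supI order_trans)
    moreover have "x1 \<squnion> x2 \<in> I" using ideal_sup[OF Iid] x by blast
    ultimately show "u \<squnion> v \<in> ?G" by blast
  qed
  have inT: "J \<in> T I k \<longleftrightarrow> prime_ideal J \<and> ?G \<subseteq> J" for J
  proof
    assume "J \<in> T I k" then show "prime_ideal J \<and> ?G \<subseteq> J"
      unfolding T_def prime_ideal_def using ideal_down by blast
  next
    assume "prime_ideal J \<and> ?G \<subseteq> J" then show "J \<in> T I k"
      unfolding T_def by blast
  qed
  have inT2: "(\<forall>y\<in>?G. F y \<in> K) \<longleftrightarrow> (\<forall>x\<in>I. (F^^Suc k) x \<in> K)" if K: "prime_ideal K" for K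
  proof
    assume "\<forall>y\<in>?G. F y \<in> K" then show "\<forall>x\<in>I. (F^^Suc k) x \<in> K" by auto
  next
    assume h: "\<forall>x\<in>I. (F^^Suc k) x \<in> K"
    show "\<forall>y\<in>?G. F y \<in> K"
    proof
      fix y assume "y \<in> ?G"
      then obtain x where "x \<in> I" "y \<le> (F^^k) x" by blast
      then have "F y \<le> (F^^Suc k) x" by (simp add: F_mono)
      then show "F y \<in> K" using h \<open>x \<in> I\<close> ideal_down K unfolding prime_ideal_def by blast
    qed
  qed
  show ?thesis
  proof (rule set_eqI)
    fix K
    show "K \<in> step (T I k) \<longleftrightarrow> K \<in> T I (Suc k)"
    proof (cases "prime_ideal K")
      case True
      have "K \<in> step (T I k) \<longleftrightarrow> (\<exists>J. prime_ideal J \<and> ?G \<subseteq> J \<and> Z J \<subseteq> K)"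
        unfolding step_def using True inT by blast
      also have "\<dots> \<longleftrightarrow> (\<forall>y\<in>?G. F y \<in> K)" by (rule lemmaA[OF G True])
      also have "\<dots> \<longleftrightarrow> K \<in> T I (Suc k)" using inT2[OF True] True unfolding T_def by blast
      finally show ?thesis .
    next
      case False then show ?thesis unfolding step_def T_def by blast
    qed
  qed
qed

lemma T_sub_step2: "S \<subseteq> {K. prime_ideal K} \<Longrightarrow> S \<subseteq> step (step S)"
proof
  fix K assume "S \<subseteq> {K. prime_ideal K}" "K \<in> S"
  then have "prime_ideal K" by blast
  then have "Z K \<in> step S" unfolding step_def using Z_prime \<open>K \<in> S\<close> by blast
  then show "K \<in> step (step S)" unfolding step_def using \<open>prime_ideal K\<close>
    by (metis (mono_tags, lifting) Z_Z mem_Collect_eq order_refl)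
qed

lemma T_mono2: assumes "prime_ideal I" shows "T I k \<subseteq> T I (Suc (Suc k))"
proof -
  have "T I k \<subseteq> step (step (T I k))" by (rule T_sub_step2) (auto simp: T_def)
  then show ?thesis using step_T[OF assms] by simp
qed

lemma T_mono2k: assumes "prime_ideal I" shows "T I k \<subseteq> T I (k + 2 * d)"
proof (induction d)
  case 0 then show ?case by simp
next
  case (Suc d)
  then show ?case using T_mono2[OF assms, of "k + 2 * d"] by simp
qed

end


lemma rtranclp_sym_rev:
  assumes "\<And>a b. R a b \<Longrightarrow> R b a" and "R\<^sup>*\<^sup>* x y" shows "R\<^sup>*\<^sup>* y x"
  using assms(2) by induction (auto intro: converse_rtranclp_into_rtranclp assms(1))

lemma comp_sym: "comparable_in P a b \<Longrightarrow> comparable_in P b a"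
  unfolding comparable_in_def by auto

lemma topspace_pt: "topspace priestley_topology = (prime_spectrum :: 'a::{bounded_lattice,distrib_lattice} set set)"
proof -
  have "\<Union>(priestley_subbasis :: 'a set set set) = prime_spectrum"
  proof
    show "\<Union>(priestley_subbasis :: 'a set set set) \<subseteq> prime_spectrum"
      unfolding priestley_subbasis_def by auto
    show "(prime_spectrum :: 'a set set) \<subseteq> \<Union>priestley_subbasis"
    proof
      fix K :: "'a set" assume K: "K \<in> prime_spectrum"
      then have "K \<in> {I \<in> prime_spectrum. top \<notin> I}"
        unfolding prime_spectrum_def prime_ideal_def by auto
      then show "K \<in> \<Union>priestley_subbasis" unfolding priestley_subbasis_def by blast
    qed
  qed
  then show ?thesis unfolding priestley_topology_def by simp
qed

lemma closed_U: "closedin priestley_topology {K \<in> (prime_spectrum :: 'a::{bounded_lattice,distrib_lattice} set set). a \<in> K}"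
proof -
  have "prime_spectrum - {K \<in> (prime_spectrum :: 'a set set). a \<in> K} = {K \<in> prime_spectrum. a \<notin> K}"
    by auto
  moreover have "{K \<in> (prime_spectrum :: 'a set set). a \<notin> K} \<in> priestley_subbasis"
    unfolding priestley_subbasis_def by blast
  ultimately show ?thesis
    unfolding closedin_def topspace_pt unfolding priestley_topology_def
    by (auto intro: topology_generated_by_Basis)
qed

context pm begin

lemma closed_T: assumes I: "prime_ideal I" shows "closedin priestley_topology (T I k)"
proof -
  have ne: "I \<noteq> {}" using I ideal_bot unfolding prime_ideal_def by blast
  have "T I k = (\<Inter>x\<in>I. {K \<in> prime_spectrum. (F^^k) x \<in> K})"
    using ne unfolding T_def prime_spectrum_def by auto
  then show ?thesis using ne closed_U by (auto intro!: closedin_INT)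
qed

lemma range_step:
  assumes M: "in_M n pc dm" and "n \<le> m"
  shows "(F^^m) x \<sqinter> (F^^Suc m) x \<le> (F^^Suc (Suc m)) x"
proof -
  have it: "iter_dmpc pc dm k = F^^k" for k unfolding iter_dmpc_def F_def[abs_def] by simp
  have "iter_dmpc pc dm n (x \<sqinter> pc (dm x)) = iter_dmpc pc dm (Suc n) (x \<sqinter> pc (dm x))"
    using M unfolding in_M_def by blast
  then have "(F^^n) (x \<sqinter> F x) = (F^^Suc n) (x \<sqinter> F x)" unfolding it F_def by simp
  then have eq: "(F^^n) x \<sqinter> (F^^Suc n) x = (F^^Suc n) x \<sqinter> (F^^Suc (Suc n)) x"
    by (simp add: Fk_inf F_inf funpow_Suc_right del: funpow.simps)
  then have r1: "(F^^n) x \<sqinter> (F^^Suc n) x \<le> (F^^Suc (Suc n)) x" by (metis inf.cobounded2)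
  obtain d where d: "m = d + n" using assms(2) by (metis le_add_diff_inverse2)
  have "(F^^d) ((F^^n) x \<sqinter> (F^^Suc n) x) \<le> (F^^d) ((F^^Suc (Suc n)) x)"
    by (rule Fk_mono[OF r1])
  moreover have fa: "(F^^a)((F^^b) x) = (F^^(a+b)) x" for a b by (simp add: funpow_add)
  ultimately show ?thesis unfolding d by (simp add: Fk_inf fa del: funpow.simps)
qed

lemma range_all:
  assumes M: "in_M n pc dm" and "n \<le> k"
  shows "(F^^k) x \<sqinter> (F^^Suc k) x \<le> (F^^(k + d)) x \<and> (F^^k) x \<sqinter> (F^^Suc k) x \<le> (F^^Suc (k + d)) x"
proof (induction d)
  case 0 then show ?case by simp
next
  case (Suc d)
  then have "(F^^k) x \<sqinter> (F^^Suc k) x \<le> (F^^(k + d)) x \<sqinter> (F^^Suc (k + d)) x" by simp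
  also have "\<dots> \<le> (F^^Suc (Suc (k + d))) x" using range_step[OF M] assms(2) by simp
  finally show ?case using Suc by simp
qed

lemma T_bound:
  assumes M: "in_M n pc dm" and "n \<le> k" and I: "prime_ideal I"
  shows "T I (k + d) \<subseteq> T I k \<union> T I (Suc k)"
proof
  fix K assume K: "K \<in> T I (k + d)"
  show "K \<in> T I k \<union> T I (Suc k)"
  proof (rule ccontr)
    assume "K \<notin> T I k \<union> T I (Suc k)"
    then obtain x1 x2 where x: "x1 \<in> I" "x2 \<in> I" "(F^^k) x1 \<notin> K" "(F^^Suc k) x2 \<notin> K"
      using K unfolding T_def by auto
    have Kp: "prime_ideal K" using K unfolding T_def by auto
    let ?x = "x1 \<squnion> x2"
    have xI: "?x \<in> I" using I ideal_sup x unfolding prime_ideal_def by blast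
    have "(F^^k) ?x \<notin> K" using x(3) Fk_mono[of x1 ?x k] Kp ideal_down
      unfolding prime_ideal_def by auto
    moreover have "(F^^Suc k) ?x \<notin> K" using x(4) Fk_mono[of x2 ?x "Suc k"] Kp ideal_down
      unfolding prime_ideal_def by (meson sup_ge2)
    ultimately have "(F^^k) ?x \<sqinter> (F^^Suc k) ?x \<notin> K" using prime_inf[OF Kp] by blast
    moreover have "(F^^(k+d)) ?x \<in> K" using K xI unfolding T_def by blast
    ultimately show False using range_all[OF M assms(2), of ?x d] Kp ideal_down
      unfolding prime_ideal_def by blast
  qed
qed

abbreviation "R \<equiv> comparable_in (prime_spectrum :: 'a set set)"

lemma E_sub: assumes I: "prime_ideal I" shows "K \<in> T I (2 * j) \<Longrightarrow> R\<^sup>*\<^sup>* I K"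
proof (induction j arbitrary: K)
  case 0
  then have "I \<subseteq> K" "prime_ideal K" unfolding T_def by auto
  then have "R I K" using I unfolding comparable_in_def prime_spectrum_def by auto
  then show ?case by blast
next
  case (Suc j)
  have "T I (2 * Suc j) = step (step (T I (2 * j)))" using step_T[OF I] by simp
  then obtain J K0 where JK: "prime_ideal K" "prime_ideal J" "Z J \<subseteq> K" "K0 \<in> T I (2 * j)" "Z K0 \<subseteq> J"
    using Suc.prems unfolding step_def by blast
  have "Z J \<subseteq> K0" using Z_anti[OF JK(5)] by simp
  moreover have "prime_ideal K0" using JK(4) unfolding T_def by auto
  ultimately have "R K0 (Z J)" "R (Z J) K" using JK Z_prime
    unfolding comparable_in_def prime_spectrum_def by auto
  then show ?case using Suc.IH[OF JK(4)] by (meson rtranclp.rtrancl_into_rtrancl)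
qed

lemma C_sub: assumes I: "prime_ideal I" shows "R\<^sup>*\<^sup>* I K \<Longrightarrow> \<exists>j. K \<in> T I (2 * j)"
proof (induction rule: rtranclp_induct)
  case base
  have "I \<in> T I 0" using I unfolding T_def by simp
  then show ?case by (metis mult_0_right)
next
  case (step K K')
  then obtain j where j: "K \<in> T I (2 * j)" by blast
  have Kp: "prime_ideal K'" "prime_ideal K" using step(2) unfolding comparable_in_def prime_spectrum_def by auto
  show ?case
  proof (cases "K \<subseteq> K'")
    case True
    then have "K' \<in> T I (2 * j)" using j Kp unfolding T_def by auto
    then show ?thesis by blast
  next
    case False
    then have "K' \<subseteq> K" using step(2) unfolding comparable_in_def by auto
    then have "Z K' \<in> step (T I (2 * j))" unfolding step_def using j Z_prime Kp Z_anti by blast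
    then have "K' \<in> step (step (T I (2 * j)))" unfolding step_def using Kp
      by (metis (mono_tags, lifting) Z_Z mem_Collect_eq order_refl)
    then have "K' \<in> T I (2 * Suc j)" using step_T[OF I] by simp
    then show ?thesis by blast
  qed
qed

lemma Z_path: "R\<^sup>*\<^sup>* J J' \<Longrightarrow> R\<^sup>*\<^sup>* (Z J) (Z J')"
proof (induction rule: rtranclp_induct)
  case base then show ?case by simp
next
  case (step K K')
  then have "R (Z K) (Z K')" using Z_prime Z_anti unfolding comparable_in_def prime_spectrum_def by auto
  then show ?case using step(3) by (meson rtranclp.rtrancl_into_rtrancl)
qed

lemma main:
  fixes C :: "'a set set"
  assumes M: "in_M n pc dm" and C: "order_component prime_spectrum C"
  shows "closedin priestley_topology C"
proof (cases "C = {}")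
  case True then show ?thesis by simp
next
  case False
  then obtain I where IC: "I \<in> C" by blast
  have pj: "pairwise_joined prime_spectrum C"
    and mx: "\<forall>D. pairwise_joined prime_spectrum D \<and> C \<subseteq> D \<longrightarrow> D = C"
    using C unfolding order_component_def by blast+
  have CP: "C \<subseteq> prime_spectrum" using pj unfolding pairwise_joined_def by blast
  have Cj: "\<And>J J'. J \<in> C \<Longrightarrow> J' \<in> C \<Longrightarrow> R\<^sup>*\<^sup>* J J'"
    using pj unfolding pairwise_joined_def path_connected_in_def by blast
  have Cmax: "\<And>D. pairwise_joined prime_spectrum D \<Longrightarrow> C \<subseteq> D \<Longrightarrow> D = C"
    using mx by blast
  have I: "prime_ideal I" using IC CP unfolding prime_spectrum_def by auto
  define C' where "C' = {K. R\<^sup>*\<^sup>* I K}"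
  have C'P: "C' \<subseteq> prime_spectrum"
  proof
    fix K assume "K \<in> C'"
    then have "R\<^sup>*\<^sup>* I K" unfolding C'_def by simp
    then show "K \<in> prime_spectrum"
      using I by (induction rule: rtranclp_induct) (auto simp: comparable_in_def prime_spectrum_def)
  qed
  have sym: "R\<^sup>*\<^sup>* a b \<Longrightarrow> R\<^sup>*\<^sup>* b a" for a b :: "'a set" by (rule rtranclp_sym_rev[OF comp_sym])
  have "C \<union> C' = C"
  proof (rule Cmax)
    show "C \<subseteq> C \<union> C'" by blast
    show "pairwise_joined prime_spectrum (C \<union> C')"
      unfolding pairwise_joined_def path_connected_in_def
    proof (intro conjI ballI)
      show "C \<union> C' \<subseteq> prime_spectrum" using CP C'P by blast
      fix J J' assume "J \<in> C \<union> C'" "J' \<in> C \<union> C'"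
      then have "R\<^sup>*\<^sup>* I J" "R\<^sup>*\<^sup>* I J'" using Cj IC unfolding C'_def by auto
      then show "R\<^sup>*\<^sup>* J J'" using sym by (meson rtranclp_trans)
    qed
  qed
  moreover have "C \<subseteq> C'" using Cj IC unfolding C'_def by auto
  ultimately have CC: "C = C'" by blast
  define N where "N = 2 * n"
  have up: "C' \<subseteq> T I N \<union> T I (Suc N)"
  proof
    fix K assume "K \<in> C'"
    then obtain j where j: "K \<in> T I (2 * j)" using C_sub[OF I] unfolding C'_def by blast
    show "K \<in> T I N \<union> T I (Suc N)"
    proof (cases "j \<le> n")
      case True
      have "T I (2 * j) \<subseteq> T I (2 * j + 2 * (n - j))" by (rule T_mono2k[OF I])
      moreover have "2 * j + 2 * (n - j) = N" using True unfolding N_def by simp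
      ultimately have "K \<in> T I N" using j by auto
      then show ?thesis by blast
    next
      case False
      then have "2 * j = N + (2 * j - N)" unfolding N_def by simp
      then have "T I (2 * j) \<subseteq> T I N \<union> T I (Suc N)"
        using T_bound[OF M _ I, of N "2 * j - N"] unfolding N_def by simp
      then show ?thesis using j by blast
    qed
  qed
  have down: "T I N \<subseteq> C'" using E_sub[OF I] unfolding C'_def N_def by blast
  show ?thesis
  proof (cases "T I (Suc N) \<inter> C' = {}")
    case True
    then have "C' = T I N" using up down by blast
    then show ?thesis using CC closed_T[OF I] by simp
  next
    case False
    then obtain K where K: "K \<in> T I (Suc N)" "K \<in> C'" by blast
    have "T I (Suc N) \<subseteq> C'"
    proof
      fix K' assume K': "K' \<in> T I (Suc N)"
      obtain J where J: "prime_ideal K" "J \<in> T I N" "Z J \<subseteq> K"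
        using K(1) step_T[OF I, of N] unfolding step_def by blast
      obtain J' where J': "prime_ideal K'" "J' \<in> T I N" "Z J' \<subseteq> K'"
        using K' step_T[OF I, of N] unfolding step_def by blast
      have "R\<^sup>*\<^sup>* I J" "R\<^sup>*\<^sup>* I J'" using down J(2) J'(2) unfolding C'_def by auto
      then have "R\<^sup>*\<^sup>* J J'" using sym rtranclp_trans by metis
      then have p: "R\<^sup>*\<^sup>* (Z J) (Z J')" by (rule Z_path)
      have pJ: "prime_ideal J" "prime_ideal J'" using J J' unfolding T_def by auto
      have "R K (Z J)" "R (Z J') K'" using J J' Z_prime[OF pJ(1)] Z_prime[OF pJ(2)]
        unfolding comparable_in_def prime_spectrum_def by auto
      then have "R\<^sup>*\<^sup>* K K'" using p by (meson r_into_rtranclp rtranclp_trans)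
      moreover have "R\<^sup>*\<^sup>* I K" using K(2) unfolding C'_def by simp
      ultimately show "K' \<in> C'" unfolding C'_def using rtranclp_trans by fastforce
    qed
    then have "C' = T I N \<union> T I (Suc N)" using up down by blast
    then show ?thesis using CC closed_T[OF I] by auto
  qed
qed

end

theorem theorem4p1:
  fixes n :: nat
    and pc dm :: "'a::{bounded_lattice,distrib_lattice} \<Rightarrow> 'a"
    and C :: "'a set set"
  assumes "in_M n pc dm"
    and "order_component prime_spectrum C"
  shows "closedin priestley_topology C"
proof -
  have "pm pc dm" using assms(1) unfolding in_M_def by (simp add: pm_def)
  then show ?thesis using pm.main assms by blast
qed

end
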